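(* Let $k\ge 2$, let $G$ be a $\Gamma_{\times k,t}$-external graph with $\delta(G)\ge k$, and let $H$ be a graph. (i) If $\delta(H)\ge k+1$, then $\Gamma_{\times k,t}(G\,\Box\,H)\ge\Gamma_{\times k,t}(G)\big(\Gamma_{\times k,t}(H)+\delta(H)-k\big)$. (ii) If $H$ is $k$-regular, then $\Gamma_{\times k,t}(G\,\Box\,H)\ge\Gamma_{\times k,t}(G)\cdot\Gamma_{\times k,t}(H)$.
   Context: A set $S\subseteq V(G)$ is a $k$-tuple total dominating set ($k$TDS) of a graph $G$ with $\delta(G)\ge k$ if $|N_G(x)\cap S|\ge k$ for every $x\in V(G)$. The upper $k$-tuple total domination number $\Gamma_{\times k,t}(G)$ is the maximum cardinality of a minimal (with respect to inclusion) $k$TDS of $G$; a minimal $k$TDS of this cardinality is a $\Gamma_{\times k,t}$-set. For $v\in S$, a vertex $v'$ is a $k$-open private neighbor of $v$ with respect to $S$ if $v\in N_G(v')$ and $|N_G(v')\cap S|=k$; it is external if $v'\notin S$. A graph $G$ is $\Gamma_{\times k,t}$-external if it has a $\Gamma_{\times k,t}$-set $S$ such that every vertex of $S$ has an external $k$-open private neighbor with respect to $S$. The Cartesian product $G\,\Box\,H$ has vertex set $V(G)\times V(H)$, with $(g_1,h_1)\sim(g_2,h_2)$ iff either $g_1=g_2$ and $h_1h_2\in E(H)$, or $h_1=h_2$ and $g_1g_2\in E(G)$. *)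

theory Defs
  imports Main
begin

definition graph :: "'a set \<Rightarrow> ('a \<times> 'a) set \<Rightarrow> bool" where
  "graph V E \<longleftrightarrow> finite V \<and> V \<noteq> {} \<and> E \<subseteq> V \<times> V \<and> sym E \<and> irrefl E"

definition nbhd :: "('a \<times> 'a) set \<Rightarrow> 'a \<Rightarrow> 'a set" where
  "nbhd E x = {y. (x, y) \<in> E}"

definition degree :: "('a \<times> 'a) set \<Rightarrow> 'a \<Rightarrow> nat" where
  "degree E x = card (nbhd E x)"

definition min_degree :: "'a set \<Rightarrow> ('a \<times> 'a) set \<Rightarrow> nat" where
  "min_degree V E = Min (degree E ` V)"

definition regular :: "'a set \<Rightarrow> ('a \<times> 'a) set \<Rightarrow> nat \<Rightarrow> bool" where
  "regular V E r \<longleftrightarrow> (\<forall>x\<in>V. degree E x = r)"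

definition kTDS :: "nat \<Rightarrow> 'a set \<Rightarrow> ('a \<times> 'a) set \<Rightarrow> 'a set \<Rightarrow> bool" where
  "kTDS k V E S \<longleftrightarrow> S \<subseteq> V \<and> (\<forall>x\<in>V. card (nbhd E x \<inter> S) \<ge> k)"

definition minimal_kTDS :: "nat \<Rightarrow> 'a set \<Rightarrow> ('a \<times> 'a) set \<Rightarrow> 'a set \<Rightarrow> bool" where
  "minimal_kTDS k V E S \<longleftrightarrow> kTDS k V E S \<and> (\<forall>T. T \<subset> S \<longrightarrow> \<not> kTDS k V E T)"

definition upper_ktdn :: "nat \<Rightarrow> 'a set \<Rightarrow> ('a \<times> 'a) set \<Rightarrow> nat" where
  "upper_ktdn k V E = Max {card S | S. minimal_kTDS k V E S}"

definition upper_ktdn_set :: "nat \<Rightarrow> 'a set \<Rightarrow> ('a \<times> 'a) set \<Rightarrow> 'a set \<Rightarrow> bool" where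
  "upper_ktdn_set k V E S \<longleftrightarrow> minimal_kTDS k V E S \<and> card S = upper_ktdn k V E"

definition ext_kopn :: "nat \<Rightarrow> 'a set \<Rightarrow> ('a \<times> 'a) set \<Rightarrow> 'a set \<Rightarrow> 'a \<Rightarrow> 'a \<Rightarrow> bool" where
  "ext_kopn k V E S v v' \<longleftrightarrow> v' \<in> V \<and> v \<in> nbhd E v' \<and> card (nbhd E v' \<inter> S) = k \<and> v' \<notin> S"

definition upper_ktdn_external :: "nat \<Rightarrow> 'a set \<Rightarrow> ('a \<times> 'a) set \<Rightarrow> bool" where
  "upper_ktdn_external k V E \<longleftrightarrow>
     (\<exists>S. upper_ktdn_set k V E S \<and> (\<forall>v\<in>S. \<exists>v'. ext_kopn k V E S v v'))"

definition cart_edges :: "('a \<times> 'a) set \<Rightarrow> 'b set \<Rightarrow> ('b \<times> 'b) set \<Rightarrow> 'a set \<Rightarrow>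
    (('a \<times> 'b) \<times> ('a \<times> 'b)) set" where
  "cart_edges EG VH EH VG =
     {((g1, h1), (g2, h2)). g1 \<in> VG \<and> g2 \<in> VG \<and> h1 \<in> VH \<and> h2 \<in> VH \<and>
        ((g1 = g2 \<and> (h1, h2) \<in> EH) \<or> (h1 = h2 \<and> (g1, g2) \<in> EG))}"

end

theory Submission
  imports Defs
begin

lemma kTDS_exists_minimal:
  assumes "finite V" "kTDS k V E S0"
  shows "\<exists>S. minimal_kTDS k V E S"
proof -
  have "\<exists>n S. kTDS k V E S \<and> card S = n" using assms by blast
  define n where "n = (LEAST n. \<exists>S. kTDS k V E S \<and> card S = n)"
  from LeastI_ex[OF \<open>\<exists>n S. kTDS k V E S \<and> card S = n\<close>]
  obtain S where S: "kTDS k V E S" "card S = n" unfolding n_def by blast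
  have fS: "finite S" using S assms(1) unfolding kTDS_def by (meson finite_subset)
  have "\<not> kTDS k V E T" if "T \<subset> S" for T
  proof
    assume T: "kTDS k V E T"
    have "card T < card S" using psubset_card_mono[OF fS that] .
    moreover have "n \<le> card T" unfolding n_def using T by (intro Least_le) blast
    ultimately show False using S by simp
  qed
  thus ?thesis using S unfolding minimal_kTDS_def by blast
qed

lemma fin_cards:
  assumes "finite V"
  shows "finite {card S | S. minimal_kTDS k V E S}"
proof -
  have "{card S | S. minimal_kTDS k V E S} \<subseteq> {0..card V}"
    using assms by (auto simp: minimal_kTDS_def kTDS_def intro: card_mono)
  thus ?thesis using finite_subset by blast
qed

lemma upper_ge:
  assumes "finite V" "minimal_kTDS k V E S"
  shows "card S \<le> upper_ktdn k V E"
  unfolding upper_ktdn_def using assms fin_cards[OF assms(1)] by (intro Max_ge) auto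

lemma upper_le:
  assumes "finite V" "minimal_kTDS k V E S0"
    and "\<And>S. minimal_kTDS k V E S \<Longrightarrow> card S \<le> B"
  shows "upper_ktdn k V E \<le> B"
  unfolding upper_ktdn_def using assms fin_cards[OF assms(1)]
  by (subst Max_le_iff) auto

lemma minimal_bound:
  assumes g: "graph V E" and D: "minimal_kTDS k V E D" and k: "k \<ge> 1"
  shows "card D + min_degree V E - k \<le> card V"
proof -
  have fV: "finite V" and nV: "V \<noteq> {}" and EV: "E \<subseteq> V \<times> V" using g unfolding graph_def by auto
  have DV: "D \<subseteq> V" and cov: "\<forall>x\<in>V. card (nbhd E x \<inter> D) \<ge> k"
    using D unfolding minimal_kTDS_def kTDS_def by auto
  have fD: "finite D" using DV fV finite_subset by blast
  obtain x where "x \<in> V" using nV by blast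
  with cov k have "card (nbhd E x \<inter> D) \<ge> 1" by auto
  hence "D \<noteq> {}" by (metis card.empty inf_bot_right not_one_le_zero)
  then obtain v where v: "v \<in> D" by blast
  have "\<not> kTDS k V E (D - {v})" using D v unfolding minimal_kTDS_def by blast
  then obtain y where y: "y \<in> V" "card (nbhd E y \<inter> (D - {v})) < k"
    using DV unfolding kTDS_def by auto
  have nbV: "nbhd E y \<subseteq> V" using EV unfolding nbhd_def by auto
  have fnb: "finite (nbhd E y)" using nbV fV finite_subset by blast
  have eq: "nbhd E y \<inter> (D - {v}) = (nbhd E y \<inter> D) - {v}" by auto
  have "card (nbhd E y \<inter> D) - 1 \<le> card ((nbhd E y \<inter> D) - {v})"
    by (simp add: card_Diff_singleton_if)
  hence ck: "card (nbhd E y \<inter> D) \<le> k" using y eq cov k by auto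
  have "min_degree V E \<le> degree E y" unfolding min_degree_def using y fV by auto
  also have "degree E y = card (nbhd E y \<inter> D) + card (nbhd E y - D)"
    unfolding degree_def using fnb
    using card_Diff_subset_Int[of "nbhd E y" D] card_mono[OF fnb, of "nbhd E y \<inter> D"] fnb by auto
  also have "card (nbhd E y - D) \<le> card (V - D)"
    using nbV fV by (intro card_mono) auto
  also have "card (V - D) = card V - card D" using DV fD by (simp add: card_Diff_subset)
  finally show ?thesis using ck card_mono[OF fV DV] by linarith
qed

lemma product_minimal:
  assumes g: "graph VG EG" and h: "graph VH EH"
    and S: "kTDS k VG EG S"
    and ext: "\<forall>v\<in>S. \<exists>v'. ext_kopn k VG EG S v v'"
  shows "minimal_kTDS k (VG \<times> VH) (cart_edges EG VH EH VG) (S \<times> VH)"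
proof -
  let ?C = "cart_edges EG VH EH VG"
  have fVG: "finite VG" and EVG: "EG \<subseteq> VG \<times> VG" using g unfolding graph_def by auto
  have fVH: "finite VH" using h unfolding graph_def by auto
  have SV: "S \<subseteq> VG" and cov: "\<forall>x\<in>VG. card (nbhd EG x \<inter> S) \<ge> k"
    using S unfolding kTDS_def by auto
  have fin: "finite (nbhd ?C p \<inter> X)" for p X
  proof -
    have "nbhd ?C p \<subseteq> VG \<times> VH" unfolding nbhd_def cart_edges_def by auto
    thus ?thesis using fVG fVH by (meson finite_Int finite_SigmaI finite_subset)
  qed
  have img_sub: "(\<lambda>g2. (g2,h)) ` (nbhd EG g \<inter> S) \<subseteq> nbhd ?C (g,h) \<inter> (S \<times> VH)"
    if "g \<in> VG" "h \<in> VH" for g h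
    using that EVG SV unfolding nbhd_def cart_edges_def by auto
  have card_img: "card ((\<lambda>g2. (g2,h)) ` A) = card A" for h and A :: "'a set"
    by (rule card_image) (auto simp: inj_on_def)
  have kt: "kTDS k (VG \<times> VH) ?C (S \<times> VH)"
    unfolding kTDS_def
  proof (intro conjI ballI)
    show "S \<times> VH \<subseteq> VG \<times> VH" using SV by auto
  next
    fix p assume "p \<in> VG \<times> VH"
    then obtain g h where p: "p = (g,h)" "g \<in> VG" "h \<in> VH" by auto
    have "k \<le> card (nbhd EG g \<inter> S)" using cov p by auto
    also have "\<dots> = card ((\<lambda>g2. (g2,h)) ` (nbhd EG g \<inter> S))" by (simp add: card_img)
    also have "\<dots> \<le> card (nbhd ?C p \<inter> (S \<times> VH))"
      using img_sub[OF p(2,3)] p(1) fin by (intro card_mono) auto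
    finally show "k \<le> card (nbhd ?C p \<inter> (S \<times> VH))" .
  qed
  have "\<not> kTDS k (VG \<times> VH) ?C T" if T: "T \<subset> S \<times> VH" for T
  proof
    assume kT: "kTDS k (VG \<times> VH) ?C T"
    obtain v h where vh: "(v,h) \<in> S \<times> VH" "(v,h) \<notin> T" using T by auto
    obtain v' where v': "ext_kopn k VG EG S v v'" using ext vh by auto
    hence v'V: "v' \<in> VG" and vv': "(v',v) \<in> EG" and cv': "card (nbhd EG v' \<inter> S) = k"
      and v'S: "v' \<notin> S"
      unfolding ext_kopn_def nbhd_def by auto
    have sub: "nbhd ?C (v',h) \<inter> T \<subseteq> (\<lambda>g2. (g2,h)) ` (nbhd EG v' \<inter> S) - {(v,h)}"
    proof
      fix q assume q: "q \<in> nbhd ?C (v',h) \<inter> T"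
      obtain g2 h2 where q2: "q = (g2,h2)" by force
      have "g2 \<in> S" "h2 \<in> VH" using q q2 T by auto
      moreover have "(g2 = v' \<and> (h,h2) \<in> EH) \<or> (h2 = h \<and> (v',g2) \<in> EG)"
        using q q2 unfolding nbhd_def cart_edges_def by auto
      ultimately show "q \<in> (\<lambda>g2. (g2,h)) ` (nbhd EG v' \<inter> S) - {(v,h)}"
        using v'S q q2 vh unfolding nbhd_def by auto
    qed
    have fA: "finite (nbhd EG v' \<inter> S)" using SV fVG finite_subset by (metis finite_Int)
    have inA: "(v,h) \<in> (\<lambda>g2. (g2,h)) ` (nbhd EG v' \<inter> S)" using vv' vh unfolding nbhd_def by auto
    have "card (nbhd ?C (v',h) \<inter> T) \<le> card ((\<lambda>g2. (g2,h)) ` (nbhd EG v' \<inter> S) - {(v,h)})"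
      using sub fA by (intro card_mono) auto
    also have "\<dots> = k - 1" using inA cv' card_img[of h "nbhd EG v' \<inter> S"] by (simp add: card_Diff_singleton_if)
    also have "\<dots> < k"
    proof -
      have "card ((\<lambda>g2. (g2,h)) ` (nbhd EG v' \<inter> S)) > 0" using inA fA by (auto simp: card_gt_0_iff)
      thus ?thesis using cv' card_img[of h "nbhd EG v' \<inter> S"] by simp
    qed
    finally have "card (nbhd ?C (v',h) \<inter> T) < k" .
    moreover have "k \<le> card (nbhd ?C (v',h) \<inter> T)" using kT v'V vh unfolding kTDS_def by auto
    ultimately show False by simp
  qed
  thus ?thesis using kt unfolding minimal_kTDS_def by blast
qed

theorem mainTheorem12:
  fixes VG :: "'a set" and EG :: "('a \<times> 'a) set"
    and VH :: "'b set" and EH :: "('b \<times> 'b) set" and k :: nat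
  assumes "k \<ge> 2"
    and "graph VG EG" and "graph VH EH"
    and "min_degree VG EG \<ge> k"
    and "upper_ktdn_external k VG EG"
  shows "(min_degree VH EH \<ge> k + 1 \<longrightarrow>
            upper_ktdn k (VG \<times> VH) (cart_edges EG VH EH VG) \<ge>
            upper_ktdn k VG EG * (upper_ktdn k VH EH + min_degree VH EH - k))
       \<and> (regular VH EH k \<longrightarrow>
            upper_ktdn k (VG \<times> VH) (cart_edges EG VH EH VG) \<ge>
            upper_ktdn k VG EG * upper_ktdn k VH EH)"
proof -
  obtain S where S: "upper_ktdn_set k VG EG S" and ext: "\<forall>v\<in>S. \<exists>v'. ext_kopn k VG EG S v v'"
    using assms(5) unfolding upper_ktdn_external_def by blast
  have cS: "card S = upper_ktdn k VG EG" and mS: "minimal_kTDS k VG EG S"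
    using S unfolding upper_ktdn_set_def by auto
  have fVG: "finite VG" and fVH: "finite VH" and nVH: "VH \<noteq> {}" and EVH: "EH \<subseteq> VH \<times> VH"
    using assms(2,3) unfolding graph_def by auto
  have mP: "minimal_kTDS k (VG \<times> VH) (cart_edges EG VH EH VG) (S \<times> VH)"
    using product_minimal[OF assms(2,3) _ ext] mS unfolding minimal_kTDS_def by blast
  have big: "card S * card VH \<le> upper_ktdn k (VG \<times> VH) (cart_edges EG VH EH VG)"
    using upper_ge[OF _ mP] fVG fVH by (simp add: card_cartesian_product)
  have nb: "nbhd EH x \<inter> VH = nbhd EH x" for x using EVH unfolding nbhd_def by auto
  have exH: "\<exists>D. minimal_kTDS k VH EH D" if "\<forall>x\<in>VH. degree EH x \<ge> k"
    using that kTDS_exists_minimal[OF fVH, of k EH VH] unfolding kTDS_def degree_def nb by auto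
  have c1: "upper_ktdn k VG EG * (upper_ktdn k VH EH + min_degree VH EH - k)
      \<le> upper_ktdn k (VG \<times> VH) (cart_edges EG VH EH VG)" if md: "min_degree VH EH \<ge> k + 1"
  proof -
    have "\<forall>x\<in>VH. degree EH x \<ge> k" using md fVH unfolding min_degree_def
      by (metis Min_le finite_imageI image_eqI le_trans add_leD1)
    then obtain D where D: "minimal_kTDS k VH EH D" using exH by blast
    have mk: "min_degree VH EH - k \<le> card VH"
      using minimal_bound[OF assms(3) D] assms(1) by linarith
    have "upper_ktdn k VH EH \<le> card VH + k - min_degree VH EH"
      using upper_le[OF fVH D, of "card VH + k - min_degree VH EH"]
        minimal_bound[OF assms(3) _] assms(1) by fastforce
    hence "upper_ktdn k VH EH + min_degree VH EH - k \<le> card VH" using md mk by linarith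
    thus ?thesis using big cS by (metis le_trans mult_le_mono2)
  qed
  have c2: "upper_ktdn k VG EG * upper_ktdn k VH EH
      \<le> upper_ktdn k (VG \<times> VH) (cart_edges EG VH EH VG)" if r: "regular VH EH k"
  proof -
    have "\<forall>x\<in>VH. degree EH x \<ge> k" using r unfolding regular_def by auto
    then obtain D where D: "minimal_kTDS k VH EH D" using exH by blast
    have "upper_ktdn k VH EH \<le> card VH"
      using upper_le[OF fVH D, of "card VH"] fVH
      unfolding minimal_kTDS_def kTDS_def by (metis card_mono)
    thus ?thesis using big cS by (metis le_trans mult_le_mono2)
  qed
  show ?thesis using c1 c2 by blast
qed

end
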